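(* Let $U\in C^3([0,1])$ satisfy $U(1)=0$, $\max_{[0,1]}U''<0$, $U'(0)=0$, $U'(1)=-1$. For any $\mu_1>0$ and $p>1$ there exists $C>0$ such that for all $\lambda=\mu+i\nu$ with $|\mu|\ge\mu_1$ and $\nu\in\mathbb R$, all $\alpha\ge0$, and all $(\phi,v)\in D(\mathcal A_{\lambda,\alpha})\times W^{1,p}(0,1)$ with $\mathcal A_{\lambda,\alpha}\phi=v$, $$\|\phi\|_{H^1(0,1)}\le C\|(1-x)^{1/2}v\|_{L^1(0,1)} .$$
   Context: $\mathcal A_{\lambda,\alpha}=(U+i\lambda)\big(-\frac{d^2}{dx^2}+\alpha^2\big)+U''$ on $(0,1)$, $D(\mathcal A_{\lambda,\alpha})=\{\phi\in H^2(0,1):\phi'(0)=0,\ \phi(1)=0\}$. *)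

theory Defs
  imports "HOL-Analysis.Analysis"
begin

definition C3_on_unit :: "(real \<Rightarrow> real) \<Rightarrow> (real \<Rightarrow> real) \<Rightarrow> (real \<Rightarrow> real) \<Rightarrow> (real \<Rightarrow> real) \<Rightarrow> bool" where
  "C3_on_unit U U1 U2 U3 \<longleftrightarrow>
     (\<forall>x\<in>{0..1}. (U has_real_derivative U1 x) (at x within {0..1})) \<and>
     (\<forall>x\<in>{0..1}. (U1 has_real_derivative U2 x) (at x within {0..1})) \<and>
     (\<forall>x\<in>{0..1}. (U2 has_real_derivative U3 x) (at x within {0..1})) \<and>
     continuous_on {0..1} U3"

text \<open>phi is (the continuous representative of) an element of H^2(0,1) with
  derivative phi1 (absolutely continuous) and second weak derivative phi2 in L^2(0,1).\<close>
definition H2_rep :: "(real \<Rightarrow> complex) \<Rightarrow> (real \<Rightarrow> complex) \<Rightarrow> (real \<Rightarrow> complex) \<Rightarrow> bool" where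
  "H2_rep phi phi1 phi2 \<longleftrightarrow>
     set_integrable lborel {0..1} phi2 \<and>
     set_integrable lborel {0..1} (\<lambda>x. (cmod (phi2 x))\<^sup>2) \<and>
     (\<forall>x\<in>{0..1}. phi1 x = phi1 0 + (LBINT t:{0..x}. phi2 t)) \<and>
     (\<forall>x\<in>{0..1}. phi x = phi 0 + (LBINT t:{0..x}. phi1 t))"

definition dom_A :: "(real \<Rightarrow> complex) \<Rightarrow> (real \<Rightarrow> complex) \<Rightarrow> (real \<Rightarrow> complex) \<Rightarrow> bool" where
  "dom_A phi phi1 phi2 \<longleftrightarrow> H2_rep phi phi1 phi2 \<and> phi1 0 = 0 \<and> phi 1 = 0"

text \<open>v is (the absolutely continuous representative of) an element of W^{1,p}(0,1)
  with weak derivative w in L^p(0,1).\<close>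
definition W1p_rep :: "real \<Rightarrow> (real \<Rightarrow> complex) \<Rightarrow> (real \<Rightarrow> complex) \<Rightarrow> bool" where
  "W1p_rep p v w \<longleftrightarrow>
     set_integrable lborel {0..1} w \<and>
     set_integrable lborel {0..1} (\<lambda>x. cmod (w x) powr p) \<and>
     (\<forall>x\<in>{0..1}. v x = v 0 + (LBINT t:{0..x}. w t))"

definition A_op :: "(real \<Rightarrow> real) \<Rightarrow> (real \<Rightarrow> real) \<Rightarrow> complex \<Rightarrow> real \<Rightarrow>
     (real \<Rightarrow> complex) \<Rightarrow> (real \<Rightarrow> complex) \<Rightarrow> real \<Rightarrow> complex" where
  "A_op U U2 lam \<alpha> phi phi2 x =
     (complex_of_real (U x) + \<i> * lam) * (- phi2 x + complex_of_real (\<alpha>\<^sup>2) * phi x)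
     + complex_of_real (U2 x) * phi x"

definition H1_norm :: "(real \<Rightarrow> complex) \<Rightarrow> (real \<Rightarrow> complex) \<Rightarrow> real" where
  "H1_norm phi phi1 = sqrt ((LBINT x:{0..1}. (cmod (phi x))\<^sup>2) + (LBINT x:{0..1}. (cmod (phi1 x))\<^sup>2))"

end

theory Submission
  imports Defs
begin


lemma rho_bound:
  fixes u2 a m M mu1 :: real
  assumes "-M \<le> u2" "u2 \<le> 0" "M \<ge> 1" "mu1 > 0" "\<bar>m\<bar> \<ge> mu1"
  shows "u2 * (a - (2*M/mu1) * \<bar>m\<bar>) / (a\<^sup>2 + m\<^sup>2) \<ge> -1/2"
proof -
  have m0: "m\<^sup>2 > 0" using assms by auto
  have D: "a\<^sup>2 + m\<^sup>2 > 0" using m0 by (smt (verit) zero_le_power2)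
  have s: "(2*M/mu1) * \<bar>m\<bar> \<ge> 2*M"
  proof -
    have "(2*M/mu1) * \<bar>m\<bar> \<ge> (2*M/mu1) * mu1" using assms by (intro mult_left_mono) auto
    thus ?thesis using assms by simp
  qed
  show ?thesis
  proof (cases "a \<le> (2*M/mu1) * \<bar>m\<bar>")
    case True
    then have "u2 * (a - (2*M/mu1) * \<bar>m\<bar>) \<ge> 0" using assms by (intro mult_nonpos_nonpos) auto
    then have "u2 * (a - (2*M/mu1) * \<bar>m\<bar>) / (a\<^sup>2 + m\<^sup>2) \<ge> 0" using D by simp
    then show ?thesis by linarith
  next
    case False
    then have a2: "a > 2*M" using s by linarith
    have "u2 * (a - (2*M/mu1) * \<bar>m\<bar>) \<ge> -M * a"
    proof -
      have "u2 * (a - (2*M/mu1) * \<bar>m\<bar>) \<ge> u2 * a" using assms False s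
        by (smt (verit) mult_left_mono_neg)
      moreover have "u2 * a \<ge> -M * a" using assms a2 by (intro mult_right_mono) auto
      ultimately show ?thesis by linarith
    qed
    moreover have "-M * a \<ge> -1/2 * (a\<^sup>2 + m\<^sup>2)"
    proof -
      have "a * (a - 2*M) \<ge> 0" using a2 assms by (intro mult_nonneg_nonneg) auto
      then have "M * a \<le> a * a / 2" by (simp add: algebra_simps)
      thus ?thesis using m0 by (simp add: power2_eq_square)
    qed
    ultimately have "u2 * (a - (2*M/mu1) * \<bar>m\<bar>) \<ge> -1/2 * (a\<^sup>2 + m\<^sup>2)" by linarith
    thus ?thesis using D by (simp add: pos_le_divide_eq)
  qed
qed

lemma CS_int:
  fixes f :: "real \<Rightarrow> real"
  assumes "a \<le> b" "continuous_on {a..b} f"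
  shows "(integral {a..b} f)\<^sup>2 \<le> (b - a) * integral {a..b} (\<lambda>y. (f y)\<^sup>2)"
proof (cases "a = b")
  case True then show ?thesis by simp
next
  case False
  then have ab: "b - a > 0" using assms by simp
  define I where "I = integral {a..b} f"
  define J where "J = integral {a..b} (\<lambda>y. (f y)\<^sup>2)"
  define t where "t = I / (b - a)"
  have i1: "(f has_integral I) {a..b}" unfolding I_def
    using assms integrable_continuous_interval by blast
  have i2: "((\<lambda>y. (f y)\<^sup>2) has_integral J) {a..b}" unfolding J_def
    using assms by (intro integrable_integral integrable_continuous_interval continuous_intros)
  have i3: "((\<lambda>y. t\<^sup>2) has_integral (b - a) * t\<^sup>2) {a..b}"
    using has_integral_const_real[of "t\<^sup>2" a b] assms by simp
  have "((\<lambda>y. (f y)\<^sup>2 - 2 * t * f y + t\<^sup>2) has_integral (J - 2 * t * I + (b - a) * t\<^sup>2)) {a..b}"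
    by (intro has_integral_add has_integral_diff has_integral_mult_right i1 i2 i3)
  moreover have "\<And>y. (f y)\<^sup>2 - 2 * t * f y + t\<^sup>2 = (f y - t)\<^sup>2" by (simp add: power2_diff)
  ultimately have "((\<lambda>y. (f y - t)\<^sup>2) has_integral (J - 2 * t * I + (b - a) * t\<^sup>2)) {a..b}" by simp
  then have nn: "J - 2 * t * I + (b - a) * t\<^sup>2 \<ge> 0" by (rule has_integral_nonneg) auto
  have bt: "(b - a) * t = I" unfolding t_def using ab by simp
  have "(b - a) * t\<^sup>2 = ((b - a) * t) * t" by (simp add: power2_eq_square)
  also have "\<dots> = I * t" using bt by simp
  finally have "2 * t * I - (b - a) * t\<^sup>2 = t * I" by simp
  also have "\<dots> = I\<^sup>2 / (b - a)" unfolding t_def by (simp add: power2_eq_square)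
  finally have "2 * t * I - (b - a) * t\<^sup>2 = I\<^sup>2 / (b - a)" .
  with nn have "I\<^sup>2 / (b - a) \<le> J" by linarith
  then show ?thesis using ab unfolding I_def[symmetric] J_def[symmetric] by (simp add: divide_le_eq mult.commute)
qed



lemma ell_bound:
  fixes c :: complex and k s :: real
  assumes "\<bar>k\<bar> \<le> s"
  shows "Re c + k * Im c \<le> (1 + s) * cmod c"
proof -
  have "k * Im c \<le> \<bar>k\<bar> * \<bar>Im c\<bar>" by (metis abs_ge_self abs_mult)
  also have "\<dots> \<le> s * cmod c" using assms abs_Im_le_cmod[of c]
    by (intro mult_mono) auto
  finally show ?thesis using complex_Re_le_cmod[of c] by (simp add: algebra_simps)
qed

lemma pw_bound:
  fixes phi phi1 :: "real \<Rightarrow> complex"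
  assumes cphi1: "continuous_on {0..1} phi1"
  and dphi: "\<And>x. x \<in> {0..1} \<Longrightarrow> (phi has_vector_derivative phi1 x) (at x within {0..1})"
  and b1: "phi 1 = 0" and x: "x \<in> {0..1}"
  shows "(cmod (phi x))\<^sup>2 \<le> (1 - x) * integral {0..1} (\<lambda>y. (cmod (phi1 y))\<^sup>2)"
proof -
  have sub: "{x..1} \<subseteq> {0..1}" using x by auto
  have "(phi1 has_integral phi 1 - phi x) {x..1}"
    apply (rule fundamental_theorem_of_calculus)
    using x apply simp
    apply (rule has_vector_derivative_within_subset[OF dphi sub])
    using x by auto
  then have px: "phi x = - integral {x..1} phi1" and pint: "phi1 integrable_on {x..1}"
    using b1 by (auto dest: integral_unique)
  have cn: "continuous_on {x..1} (\<lambda>y. cmod (phi1 y))"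
    using continuous_on_subset[OF cphi1 sub] by (intro continuous_intros)
  define I where "I = integral {x..1} (\<lambda>y. cmod (phi1 y))"
  have "cmod (phi x) \<le> I" unfolding px I_def norm_minus_cancel
    by (rule integral_norm_bound_integral[OF pint integrable_continuous_interval[OF cn]]) simp
  then have "(cmod (phi x))\<^sup>2 \<le> I\<^sup>2" by (intro power_mono) auto
  also have "I\<^sup>2 \<le> (1 - x) * integral {x..1} (\<lambda>y. (cmod (phi1 y))\<^sup>2)"
    unfolding I_def using x cn by (intro CS_int) auto
  also have "\<dots> \<le> (1 - x) * integral {0..1} (\<lambda>y. (cmod (phi1 y))\<^sup>2)"
  proof (rule mult_left_mono)
    show "integral {x..1} (\<lambda>y. (cmod (phi1 y))\<^sup>2) \<le> integral {0..1} (\<lambda>y. (cmod (phi1 y))\<^sup>2)"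
      apply (rule integral_subset_le[OF sub])
      using continuous_on_subset[OF cphi1 sub] cphi1
      by (auto intro!: integrable_continuous_interval continuous_intros)
  qed (use x in auto)
  finally show ?thesis .
qed



lemma ell_lin:
  fixes r1 r2 r3 k :: real and w d :: complex
  shows "Re (of_real r1 + of_real r2 + of_real r3 * w - d) + k * Im (of_real r1 + of_real r2 + of_real r3 * w - d)
     = r1 + r2 + r3 * (Re w + k * Im w) - (Re d + k * Im d)"
  by (simp add: algebra_simps)

lemma core:
  fixes phi phi1 h v :: "real \<Rightarrow> complex" and U U2 :: "real \<Rightarrow> real"
    and lam :: complex and \<alpha> M mu1 :: real
  assumes cphi: "continuous_on {0..1} phi" and cphi1: "continuous_on {0..1} phi1"
  and cv: "continuous_on {0..1} v"
  and dphi: "\<And>x. x \<in> {0..1} \<Longrightarrow> (phi has_vector_derivative phi1 x) (at x within {0..1})"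
  and dphi1: "\<And>x. x \<in> {0..1} \<Longrightarrow> (phi1 has_vector_derivative h x) (at x within {0..1})"
  and b0: "phi1 0 = 0" and b1: "phi 1 = 0"
  and heq: "\<And>x. x \<in> {0..1} \<Longrightarrow> h x = of_real (\<alpha>\<^sup>2) * phi x
       + (of_real (U2 x) * phi x - v x) / (of_real (U x) + \<i> * lam)"
  and U2b: "\<And>x. x \<in> {0..1} \<Longrightarrow> -M \<le> U2 x \<and> U2 x \<le> 0"
  and M1: "M \<ge> 1" and mu: "mu1 > 0" "\<bar>Re lam\<bar> \<ge> mu1"
  shows "sqrt (integral {0..1} (\<lambda>x. (cmod (phi x))\<^sup>2) + integral {0..1} (\<lambda>x. (cmod (phi1 x))\<^sup>2))
     \<le> (4 * (1 + 2*M/mu1) / mu1) * integral {0..1} (\<lambda>x. sqrt (1 - x) * cmod (v x))"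
proof -
  define E where "E = integral {0..1} (\<lambda>x. (cmod (phi1 x))\<^sup>2)"
  define P where "P = integral {0..1} (\<lambda>x. (cmod (phi x))\<^sup>2)"
  define R where "R = integral {0..1} (\<lambda>x. sqrt (1 - x) * cmod (v x))"
  define s where "s = 2*M/mu1"
  define c where "c = (1 + s) / mu1"
  define k where "k = s * sgn (Re lam)"
  define ell where "ell = (\<lambda>c::complex. Re c + k * Im c)"
  have s0: "s > 0" unfolding s_def using M1 mu by auto
  have c0: "c > 0" unfolding c_def using s0 mu by auto
  have m0: "Re lam \<noteq> 0" using mu by auto
  have ks: "\<bar>k\<bar> \<le> s" unfolding k_def using s0 by (auto simp: abs_mult abs_sgn_eq)
  have km: "k * Re lam = s * \<bar>Re lam\<bar>" unfolding k_def using m0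
    by (cases "Re lam > 0") (auto simp: sgn_if)
  have bl: "bounded_linear ell" unfolding ell_def
    by (intro bounded_linear_add bounded_linear_Re bounded_linear_mult_right[THEN bounded_linear_compose, OF bounded_linear_Im])
  have i1: "(\<lambda>x. (cmod (phi1 x))\<^sup>2) integrable_on {0..1}"
    using cphi1 by (intro integrable_continuous_interval continuous_intros)
  have i2: "(\<lambda>x. (cmod (phi x))\<^sup>2) integrable_on {0..1}"
    using cphi by (intro integrable_continuous_interval continuous_intros)
  have i3: "(\<lambda>x. sqrt (1 - x) * cmod (v x)) integrable_on {0..1}"
    using cv by (intro integrable_continuous_interval continuous_intros)
  have E0: "E \<ge> 0" unfolding E_def by (rule integral_nonneg[OF i1]) auto
  have P0: "P \<ge> 0" unfolding P_def by (rule integral_nonneg[OF i2]) auto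
  have R0: "R \<ge> 0" unfolding R_def by (rule integral_nonneg[OF i3]) auto
  have pw: "cmod (phi x) \<le> sqrt (1 - x) * sqrt E" if x: "x \<in> {0..1}" for x
  proof -
    have "(cmod (phi x))\<^sup>2 \<le> (1 - x) * E" unfolding E_def by (rule pw_bound[OF cphi1 dphi b1 x])
    then have "cmod (phi x) \<le> sqrt ((1 - x) * E)" by (rule real_le_rsqrt)
    then show ?thesis by (simp add: real_sqrt_mult)
  qed
  have "((\<lambda>y. phi1 y * cnj (phi1 y) + h y * cnj (phi y)) has_integral
           (phi1 1 * cnj (phi 1) - phi1 0 * cnj (phi 0))) {0..1}"
    by (rule fundamental_theorem_of_calculus)
       (auto intro!: has_vector_derivative_mult has_vector_derivative_cnj dphi dphi1)
  then have "((\<lambda>y. phi1 y * cnj (phi1 y) + h y * cnj (phi y)) has_integral 0) {0..1}"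
    using b0 b1 by simp
  from has_integral_linear[OF this bl]
  have FI: "((\<lambda>y. ell (phi1 y * cnj (phi1 y) + h y * cnj (phi y))) has_integral 0) {0..1}"
    unfolding ell_def by (simp add: o_def)
  have low: "(cmod (phi1 y))\<^sup>2 - (cmod (phi y))\<^sup>2 / 2 - c * sqrt E * (sqrt (1 - y) * cmod (v y))
      \<le> ell (phi1 y * cnj (phi1 y) + h y * cnj (phi y))" if y: "y \<in> {0..1}" for y
  proof -
    define p where "p = phi y"
    define p1 where "p1 = phi1 y"
    define vv where "vv = v y"
    define u2 where "u2 = U2 y"
    define z where "z = of_real (U y) + \<i> * lam"
    have Imz: "Im z = Re lam" unfolding z_def by simp
    have Rez: "Re z = U y - Im lam" unfolding z_def by simp
    have z0: "z \<noteq> 0" using Imz m0 by auto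
    have zmu: "cmod z \<ge> mu1" using abs_Im_le_cmod[of z] Imz mu by linarith
    have eq: "phi1 y * cnj (phi1 y) + h y * cnj (phi y)
        = of_real ((cmod p1)\<^sup>2) + of_real (\<alpha>\<^sup>2 * (cmod p)\<^sup>2) + of_real ((cmod p)\<^sup>2) * (of_real u2 / z)
          - (vv / z) * cnj p"
    proof -
      have hp: "h y * cnj p = of_real (\<alpha>\<^sup>2) * (p * cnj p) + (of_real u2 / z) * (p * cnj p) - (vv / z) * cnj p"
        unfolding heq[OF y] p_def u2_def vv_def z_def by (simp add: algebra_simps diff_divide_distrib)
      have n1: "p * cnj p = of_real ((cmod p)\<^sup>2)" by (rule complex_norm_square[symmetric])
      have n2: "p1 * cnj p1 = of_real ((cmod p1)\<^sup>2)" by (rule complex_norm_square[symmetric])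
      have hp2: "h y * cnj p = of_real (\<alpha>\<^sup>2) * of_real ((cmod p)\<^sup>2) + (of_real u2 / z) * of_real ((cmod p)\<^sup>2) - (vv / z) * cnj p"
        using hp unfolding n1 .
      show ?thesis unfolding p1_def[symmetric] p_def[symmetric] n2 hp2
        by (simp add: algebra_simps)
    qed
    have lin: "ell (phi1 y * cnj (phi1 y) + h y * cnj (phi y))
        = (cmod p1)\<^sup>2 + \<alpha>\<^sup>2 * (cmod p)\<^sup>2 + (cmod p)\<^sup>2 * ell (of_real u2 / z) - ell ((vv / z) * cnj p)"
      unfolding eq ell_def by (rule ell_lin)
    have rho: "ell (of_real u2 / z) = u2 * (Re z - s * \<bar>Re lam\<bar>) / ((Re z)\<^sup>2 + (Re lam)\<^sup>2)"
    proof -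
      have "ell (of_real u2 / z) = (u2 * Re z - k * (u2 * Im z)) / ((Re z)\<^sup>2 + (Im z)\<^sup>2)"
        unfolding ell_def by (simp add: Re_divide Im_divide add_divide_distrib diff_divide_distrib)
      also have "\<dots> = u2 * (Re z - s * \<bar>Re lam\<bar>) / ((Re z)\<^sup>2 + (Re lam)\<^sup>2)"
        unfolding Imz using km by (simp add: algebra_simps)
      finally show ?thesis .
    qed
    have rb: "ell (of_real u2 / z) \<ge> -1/2"
      unfolding rho s_def using U2b[OF y] M1 mu unfolding u2_def by (intro rho_bound) auto
    have t1: "(cmod p)\<^sup>2 * ell (of_real u2 / z) \<ge> (cmod p)\<^sup>2 * (-1/2)"
      using rb by (intro mult_left_mono) auto
    have t2: "ell ((vv / z) * cnj p) \<le> c * sqrt E * (sqrt (1 - y) * cmod vv)"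
    proof -
      have e1: "ell ((vv / z) * cnj p) \<le> (1 + s) * cmod ((vv / z) * cnj p)"
        unfolding ell_def by (rule ell_bound[OF ks])
      have "cmod ((vv / z) * cnj p) = cmod vv * cmod p / cmod z"
        by (simp add: norm_mult norm_divide)
      also have "\<dots> \<le> cmod vv * cmod p / mu1"
        using zmu mu by (intro divide_left_mono mult_nonneg_nonneg mult_pos_pos) auto
      also have "\<dots> \<le> cmod vv * (sqrt (1 - y) * sqrt E) / mu1"
        using pw[OF y] mu unfolding p_def by (intro divide_right_mono mult_left_mono) auto
      finally have e2: "cmod ((vv / z) * cnj p) \<le> cmod vv * (sqrt (1 - y) * sqrt E) / mu1" .
      have "(1 + s) * cmod ((vv / z) * cnj p) \<le> (1 + s) * (cmod vv * (sqrt (1 - y) * sqrt E) / mu1)"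
        using e2 s0 by (intro mult_left_mono) auto
      also have "\<dots> = c * sqrt E * (sqrt (1 - y) * cmod vv)" unfolding c_def by simp
      finally show ?thesis using e1 by linarith
    qed
    have "\<alpha>\<^sup>2 * (cmod p)\<^sup>2 \<ge> 0" by simp
    then show ?thesis unfolding lin using t1 t2 unfolding p_def p1_def vv_def by linarith
  qed
  have LI: "((\<lambda>y. (cmod (phi1 y))\<^sup>2 - (cmod (phi y))\<^sup>2 / 2 - c * sqrt E * (sqrt (1 - y) * cmod (v y)))
      has_integral (E - P / 2 - c * sqrt E * R)) {0..1}"
    unfolding E_def P_def R_def
    by (intro has_integral_diff has_integral_divide has_integral_mult_right integrable_integral i1 i2 i3)
  have A: "E - P / 2 - c * sqrt E * R \<le> 0"
    using has_integral_le[OF LI FI] low by auto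
  have pwE: "(cmod (phi y))\<^sup>2 \<le> E" if y: "y \<in> {0..1}" for y
  proof -
    have "(cmod (phi y))\<^sup>2 \<le> (1 - y) * E" unfolding E_def by (rule pw_bound[OF cphi1 dphi b1 y])
    also have "\<dots> \<le> 1 * E" using y E0 by (intro mult_right_mono) auto
    finally show ?thesis by simp
  qed
  have B: "P \<le> E"
    using has_integral_le[OF integrable_integral[OF i2] has_integral_const_real[of E 0 1]] pwE
    unfolding P_def by auto
  define q where "q = sqrt E"
  have Eq: "E = q\<^sup>2" unfolding q_def using E0 by simp
  have q0: "q \<ge> 0" unfolding q_def using E0 by simp
  have key: "q\<^sup>2 / 2 \<le> c * q * R" using A B Eq unfolding q_def[symmetric] by linarith
  have fin: "sqrt (P + E) \<le> 4 * c * R"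
  proof (cases "q = 0")
    case True
    then have "P + E = 0" using B P0 Eq by simp
    moreover have "4 * c * R \<ge> 0" using c0 R0 by simp
    ultimately show ?thesis by simp
  next
    case False
    then have qp: "q > 0" using q0 by simp
    have "q * q \<le> q * (2 * c * R)" using key by (simp add: power2_eq_square algebra_simps)
    then have qb: "q \<le> 2 * c * R" using qp by simp
    have q4: "(2 * q)\<^sup>2 = 4 * q\<^sup>2" by (simp add: power_mult_distrib)
    have "sqrt (P + E) \<le> sqrt ((2 * q)\<^sup>2)" using B Eq E0 q4 by (intro real_sqrt_le_mono) linarith
    also have "\<dots> = 2 * q" using q0 by (simp only: real_sqrt_abs)
    also have "\<dots> \<le> 4 * c * R" using qb by (simp add: mult_ac)
    finally show ?thesis .
  qed
  have cc: "4 * (1 + 2*M/mu1) / mu1 = 4 * c" unfolding c_def s_def by simp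
  show ?thesis unfolding cc P_def[symmetric] E_def[symmetric] R_def[symmetric] using fin by (simp add: mult.assoc)
qed



lemma set_int_eq:
  fixes f :: "real \<Rightarrow> complex"
  assumes "set_integrable lborel {0..1} f" "x \<in> {0..1}"
  shows "(LBINT t:{0..x}. f t) = integral {0..x} f"
proof -
  have "set_integrable lborel {0..x} f"
    by (rule set_integrable_subset[OF assms(1)]) (use assms(2) in auto)
  then show ?thesis by (rule set_borel_integral_eq_integral(2))
qed

lemma rep_cont:
  fixes f F :: "real \<Rightarrow> complex"
  assumes si: "set_integrable lborel {0..1} f"
    and rep: "\<forall>x\<in>{0..1}. F x = F 0 + (LBINT t:{0..x}. f t)"
  shows "\<forall>x\<in>{0..1}. F x = F 0 + integral {0..x} f" "continuous_on {0..1} F"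
proof -
  show r: "\<forall>x\<in>{0..1}. F x = F 0 + integral {0..x} f"
  proof
    fix x :: real assume x: "x \<in> {0..1}"
    have "F x = F 0 + (LBINT t:{0..x}. f t)" using rep x by (rule bspec)
    also have "(LBINT t:{0..x}. f t) = integral {0..x} f" by (rule set_int_eq[OF si x])
    finally show "F x = F 0 + integral {0..x} f" .
  qed
  have fi: "f integrable_on {0..1}" by (rule set_borel_integral_eq_integral(1)[OF si])
  have "continuous_on {0..1} (\<lambda>x. F 0 + integral {0..x} f)"
    by (intro continuous_intros indefinite_integral_continuous_1 fi)
  then show "continuous_on {0..1} F"
    by (rule continuous_on_eq) (metis r)
qed

lemma solve_eq:
  fixes z a b c d :: complex
  assumes "z \<noteq> 0" "z * (- a + b) + c = d"
  shows "a = b + (c - d) / z"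
proof -
  have e: "z * (- a + b) = d - c" using assms(2) by (simp add: algebra_simps)
  have "- a + b = (z * (- a + b)) / z" using assms(1) by simp
  also have "\<dots> = (d - c) / z" unfolding e ..
  finally have "- a + b = (d - c) / z" .
  then have "a = b - (d - c) / z" by (simp add: algebra_simps)
  also have "\<dots> = b + (c - d) / z" by (simp add: diff_divide_distrib)
  finally show ?thesis .
qed

lemma cont_of_deriv:
  assumes "\<forall>x\<in>{0..1}. (f has_real_derivative f' x) (at x within {0..1})"
  shows "continuous_on {0..1} f"
  unfolding continuous_on_eq_continuous_within
proof
  fix x :: real assume "x \<in> {0..1}"
  with assms have "(f has_real_derivative f' x) (at x within {0..1})" by blast
  then show "continuous (at x within {0..1}) f" by (rule DERIV_continuous)
qed

theorem mainTheorem10: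
  fixes U U1 U2 U3 :: "real \<Rightarrow> real"
  assumes "C3_on_unit U U1 U2 U3"
    and "U 1 = 0"
    and "(SUP x\<in>{0..1}. U2 x) < 0"
    and "U1 0 = 0"
    and "U1 1 = -1"
  shows "\<forall>\<mu>1 > 0. \<forall>p > (1::real). \<exists>C > 0.
     \<forall>lam::complex. \<forall>\<alpha>::real. \<forall>phi phi1 phi2 v w :: real \<Rightarrow> complex.
       \<bar>Re lam\<bar> \<ge> \<mu>1 \<longrightarrow> \<alpha> \<ge> 0 \<longrightarrow>
       dom_A phi phi1 phi2 \<longrightarrow> W1p_rep p v w \<longrightarrow>
       (AE x in lborel. x \<in> {0<..<1} \<longrightarrow> A_op U U2 lam \<alpha> phi phi2 x = v x) \<longrightarrow>
       H1_norm phi phi1 \<le> C * (LBINT x:{0..1}. sqrt (1 - x) * cmod (v x))"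
proof (intro allI impI)
  fix mu1 p :: real
  assume mu1: "mu1 > 0" and "p > 1"
  have cU: "continuous_on {0..1} U" and cU2: "continuous_on {0..1} U2"
  proof -
    have "\<forall>x\<in>{0..1}. (U has_real_derivative U1 x) (at x within {0..1})"
      "\<forall>x\<in>{0..1}. (U2 has_real_derivative U3 x) (at x within {0..1})"
      using assms(1) unfolding C3_on_unit_def by blast+
    then show "continuous_on {0..1} U" "continuous_on {0..1} U2" by (blast intro: cont_of_deriv)+
  qed
  have "compact (U2 ` {0..1})" by (rule compact_continuous_image[OF cU2]) simp
  then have bU2: "bounded (U2 ` {0..1})" by (rule compact_imp_bounded)
  then obtain B where B0: "\<forall>y\<in>U2 ` {0..1}. norm y \<le> B"
    unfolding bounded_iff by blast
  have B: "\<bar>U2 x\<bar> \<le> B" if "x \<in> {0..1}" for x using B0 that by auto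
  define M where "M = max 1 B"
  have M1: "M \<ge> 1" unfolding M_def by simp
  have U2b: "-M \<le> U2 x \<and> U2 x \<le> 0" if x: "x \<in> {0..1}" for x
  proof
    show "-M \<le> U2 x" using B[OF x] unfolding M_def by linarith
    have "U2 x \<le> (SUP x\<in>{0..1}. U2 x)"
      by (rule cSUP_upper[OF x bounded_imp_bdd_above[OF bU2]])
    then show "U2 x \<le> 0" using assms(3) by linarith
  qed
  show "\<exists>C>0. \<forall>lam \<alpha> phi phi1 phi2 v w.
            mu1 \<le> \<bar>Re lam\<bar> \<longrightarrow> 0 \<le> \<alpha> \<longrightarrow> dom_A phi phi1 phi2 \<longrightarrow> W1p_rep p v w \<longrightarrow>
            (AE x in lborel. x \<in> {0<..<1} \<longrightarrow> A_op U U2 lam \<alpha> phi phi2 x = v x) \<longrightarrow>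
            H1_norm phi phi1 \<le> C * (LBINT x:{0..1}. sqrt (1 - x) * cmod (v x))"
  proof (intro exI[of _ "4 * (1 + 2*M/mu1) / mu1"] conjI allI impI)
    have "2*M/mu1 \<ge> 0" using M1 mu1 by simp
    then have "0 < 1 + 2*M/mu1" by linarith
    then have pos: "0 < 4 * (1 + 2*M/mu1)" by (rule mult_pos_pos[rotated]) simp
    show "0 < 4 * (1 + 2*M/mu1) / mu1" by (rule divide_pos_pos[OF pos mu1])
    fix lam :: complex and \<alpha> :: real and phi phi1 phi2 v w :: "real \<Rightarrow> complex"
    assume lam: "mu1 \<le> \<bar>Re lam\<bar>" and "0 \<le> \<alpha>" and dA: "dom_A phi phi1 phi2"
      and W: "W1p_rep p v w"
      and AE: "AE x in lborel. x \<in> {0<..<1} \<longrightarrow> A_op U U2 lam \<alpha> phi phi2 x = v x"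
    from dA have si2: "set_integrable lborel {0..1} phi2"
      and r1: "\<forall>x\<in>{0..1}. phi1 x = phi1 0 + (LBINT t:{0..x}. phi2 t)"
      and r0: "\<forall>x\<in>{0..1}. phi x = phi 0 + (LBINT t:{0..x}. phi1 t)"
      and b0: "phi1 0 = 0" and b1: "phi 1 = 0"
      unfolding dom_A_def H2_rep_def by blast+
    from W have siw: "set_integrable lborel {0..1} w"
      and rv: "\<forall>x\<in>{0..1}. v x = v 0 + (LBINT t:{0..x}. w t)"
      unfolding W1p_rep_def by blast+
    have cv: "continuous_on {0..1} v" by (rule rep_cont(2)[OF siw rv])
    have cphi1: "continuous_on {0..1} phi1" by (rule rep_cont(2)[OF si2 r1])
    have si1: "set_integrable lborel {0..1} phi1" by (rule borel_integrable_atLeastAtMost'[OF cphi1])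
    have cphi: "continuous_on {0..1} phi" by (rule rep_cont(2)[OF si1 r0])
    have rphi: "\<forall>x\<in>{0..1}. phi x = phi 0 + integral {0..x} phi1" by (rule rep_cont(1)[OF si1 r0])
    have rphi1: "\<forall>x\<in>{0..1}. phi1 x = phi1 0 + integral {0..x} phi2" by (rule rep_cont(1)[OF si2 r1])
    define z where "z = (\<lambda>x. complex_of_real (U x) + \<i> * lam)"
    have z0: "z x \<noteq> 0" for x
    proof -
      have "Im (z x) = Re lam" unfolding z_def by simp
      moreover have "Re lam \<noteq> 0" using lam mu1 by linarith
      ultimately show ?thesis by (metis zero_complex.sel(2))
    qed
    define h where "h = (\<lambda>x. of_real (\<alpha>\<^sup>2) * phi x + (of_real (U2 x) * phi x - v x) / z x)"
    have cz: "continuous_on {0..1} z" unfolding z_def using cU by (intro continuous_intros)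
    have ch: "continuous_on {0..1} h" unfolding h_def
      using z0 by (intro continuous_intros cphi cv cz cU2) auto
    have AE2: "AE x in lborel. x \<in> {0..1} \<longrightarrow> phi2 x = h x"
      using AE AE_lborel_singleton[of 0] AE_lborel_singleton[of 1]
    proof eventually_elim
      case (elim x)
      show ?case
      proof
        assume x: "x \<in> {0..1}"
        then have "x \<in> {0<..<1}" using elim by auto
        then have "A_op U U2 lam \<alpha> phi phi2 x = v x" using elim by auto
        then have "z x * (- phi2 x + of_real (\<alpha>\<^sup>2) * phi x) + of_real (U2 x) * phi x = v x"
          unfolding A_op_def z_def by simp
        then show "phi2 x = h x" unfolding h_def by (rule solve_eq[OF z0])
      qed
    qed
    then obtain N where N: "{x \<in> space lborel. \<not> (x \<in> {0..1} \<longrightarrow> phi2 x = h x)} \<subseteq> N"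
      "emeasure lborel N = 0" "N \<in> sets lborel" by (rule AE_E)
    have negN: "negligible N"
      unfolding negligible_iff_null_sets using N(2,3) by (intro null_sets_completionI) (simp add: null_sets_def)
    have Nsub: "phi2 y = h y" if "y \<in> {0..1}" "y \<notin> N" for y
      using N(1) that by auto
    have rphi1h: "phi1 x = phi1 0 + integral {0..x} h" if x: "x \<in> {0..1}" for x
    proof -
      have "integral {0..x} phi2 = integral {0..x} h"
        by (rule integral_spike[OF negN]) (use Nsub x in auto)
      moreover have "phi1 x = phi1 0 + integral {0..x} phi2" using rphi1 x by blast
      ultimately show ?thesis by simp
    qed
    have dphi1: "(phi1 has_vector_derivative h x) (at x within {0..1})" if x: "x \<in> {0..1}" for x
    proof -
      have d: "((\<lambda>u. phi1 0 + integral {0..u} h) has_vector_derivative h x) (at x within {0..1})"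
        using has_vector_derivative_add[OF has_vector_derivative_const integral_has_vector_derivative[OF ch x]]
        by simp
      show ?thesis by (rule has_vector_derivative_transform[OF x rphi1h d])
    qed
    have rphi': "phi y = phi 0 + integral {0..y} phi1" if "y \<in> {0..1}" for y
      using rphi that by blast
    have dphi: "(phi has_vector_derivative phi1 x) (at x within {0..1})" if x: "x \<in> {0..1}" for x
    proof -
      have d: "((\<lambda>u. phi 0 + integral {0..u} phi1) has_vector_derivative phi1 x) (at x within {0..1})"
        using has_vector_derivative_add[OF has_vector_derivative_const integral_has_vector_derivative[OF cphi1 x]]
        by simp
      show ?thesis by (rule has_vector_derivative_transform[OF x rphi' d])
    qed
    have heq: "h x = of_real (\<alpha>\<^sup>2) * phi x
       + (of_real (U2 x) * phi x - v x) / (of_real (U x) + \<i> * lam)" if "x \<in> {0..1}" for x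
      unfolding h_def z_def by simp
    have main: "sqrt (integral {0..1} (\<lambda>x. (cmod (phi x))\<^sup>2) + integral {0..1} (\<lambda>x. (cmod (phi1 x))\<^sup>2))
     \<le> (4 * (1 + 2*M/mu1) / mu1) * integral {0..1} (\<lambda>x. sqrt (1 - x) * cmod (v x))"
      by (rule core[OF cphi cphi1 cv dphi dphi1 b0 b1 heq U2b M1 mu1 lam])
    have e1: "(LBINT x:{0..1}. (cmod (phi x))\<^sup>2) = integral {0..1} (\<lambda>x. (cmod (phi x))\<^sup>2)"
      using cphi by (intro set_borel_integral_eq_integral(2) borel_integrable_atLeastAtMost' continuous_intros)
    have e2: "(LBINT x:{0..1}. (cmod (phi1 x))\<^sup>2) = integral {0..1} (\<lambda>x. (cmod (phi1 x))\<^sup>2)"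
      using cphi1 by (intro set_borel_integral_eq_integral(2) borel_integrable_atLeastAtMost' continuous_intros)
    have e3: "(LBINT x:{0..1}. sqrt (1 - x) * cmod (v x)) = integral {0..1} (\<lambda>x. sqrt (1 - x) * cmod (v x))"
      using cv by (intro set_borel_integral_eq_integral(2) borel_integrable_atLeastAtMost' continuous_intros)
    show "H1_norm phi phi1 \<le> 4 * (1 + 2*M/mu1) / mu1 * (LBINT x:{0..1}. sqrt (1 - x) * cmod (v x))"
      unfolding H1_norm_def e1 e2 e3 by (rule main)
  qed
qed

end
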